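(* Let $(g,f)=(d_{n,k})_{n,k\ge 0}$ be a Riordan matrix possessing a type-I $B$-sequence $(b_j)_{j\ge 0}$, and let $A(t)$ and $B(t)=\sum_{j\ge0}b_jt^j$ be the generating functions of its $A$-sequence and of this $B$-sequence. Then $$f=t+tf\,B(tf),\qquad t=\bar f+t\bar f\,B(t\bar f),\qquad A(t)=1+t\,B\!\left(\frac{t^2}{A(t)}\right),$$ and these three formulas are equivalent to one another.
   Context: Let $K$ be $\mathbb{R}$ or $\mathbb{C}$. A (proper) Riordan matrix is a pair $(g,f)$ of formal power series in $K[[t]]$ with $g(0)=1$, $f(0)=0$, $f'(0)\neq 0$, identified with the infinite lower triangular matrix $(d_{n,k})_{n,k\ge0}$, $d_{n,k}=[t^n]g(t)f(t)^k$; we set $d_{n,k}=0$ if $n<0$, $k<0$ or $k>n$. $\bar f$ denotes the compositional inverse of $f$. The $A$-sequence $(a_j)_{j\ge0}$ of $(g,f)$ is the unique sequence whose generating function $A(t)=\sum_j a_jt^j$ satisfies $f(t)=tA(f(t))$ (equivalently $\bar f(t)=t/A(t)$). A type-I $B$-sequence of $(g,f)$ is a sequence $(b_j)_{j\ge0}$ such that $d_{n+1,k}=d_{n,k-1}+\sum_{j\ge0}b_j d_{n-j,k+j}$ for all $n\ge0$ and $k\ge1$. *)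

theory Defs
  imports "HOL-Computational_Algebra.Formal_Power_Series"
begin

definition riordan :: "'a::field fps \<Rightarrow> 'a fps \<Rightarrow> bool" where
  "riordan g f \<longleftrightarrow> fps_nth g 0 = 1 \<and> fps_nth f 0 = 0 \<and> fps_nth (fps_deriv f) 0 \<noteq> 0"

definition rentry :: "'a::field fps \<Rightarrow> 'a fps \<Rightarrow> int \<Rightarrow> int \<Rightarrow> 'a" where
  "rentry g f n k = (if n < 0 \<or> k < 0 \<or> k > n then 0
                      else fps_nth (g * f ^ nat k) (nat n))"

definition is_A_series :: "'a::field fps \<Rightarrow> 'a fps \<Rightarrow> bool" where
  "is_A_series f A \<longleftrightarrow> f = fps_X * fps_compose A f"

text \<open>Type-I B-sequence. The sum over j \<ge> 0 is finite: all terms with j > n vanish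
  because d_{n-j,k+j} = 0 for n - j < 0; we sum over j = 0..n.\<close>
definition is_B_seq_I :: "'a::field fps \<Rightarrow> 'a fps \<Rightarrow> (nat \<Rightarrow> 'a) \<Rightarrow> bool" where
  "is_B_seq_I g f b \<longleftrightarrow>
     (\<forall>n::int. \<forall>k::int. n \<ge> 0 \<longrightarrow> k \<ge> 1 \<longrightarrow>
        rentry g f (n + 1) k =
          rentry g f n (k - 1) + (\<Sum>j\<in>{0..nat n}. b j * rentry g f (n - int j) (k + int j)))"

end

theory Submission
  imports Defs
begin
unbundle fps_syntax

lemma prod_low_zero:
  fixes g f :: "'a::field fps"
  assumes "f$0 = 0" "n < k"
  shows "(g * f^k) $ n = 0"
  unfolding fps_mult_nth
  by (rule sum.neutral) (use assms startsby_zero_power_prefix[OF assms(1)] in auto)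

lemma rentry_eq:
  fixes g f :: "'a::field fps"
  assumes "f$0 = 0" "n \<ge> 0" "k \<ge> 0"
  shows "rentry g f n k = (g * f^nat k) $ nat n"
  using assms prod_low_zero[OF assms(1), of "nat n" "nat k" g]
  by (auto simp: rentry_def)

lemma mult_compose_nth:
  fixes P B h :: "'a::field fps"
  assumes h0: "h$0 = 0"
  shows "(P * (B oo h))$n = (\<Sum>i=0..n. B$i * (P * h^i)$n)"
proof -
  have "(P * (B oo h))$n = (\<Sum>m=0..n. P$(n-m) * (B oo h)$m)"
    unfolding fps_mult_nth by (rule sum.reindex_bij_witness[where i="\<lambda>m. n-m" and j="\<lambda>m. n-m"]) auto
  also have "\<dots> = (\<Sum>m=0..n. \<Sum>i=0..n. P$(n-m) * (B$i * (h^i)$m))"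
  proof (rule sum.cong[OF refl])
    fix m assume m: "m \<in> {0..n}"
    have "(B oo h)$m = (\<Sum>i=0..n. B$i * (h^i)$m)"
      unfolding fps_compose_nth
      by (rule sum.mono_neutral_left) (use m startsby_zero_power_prefix[OF h0] in auto)
    then show "P$(n-m) * (B oo h)$m = (\<Sum>i=0..n. P$(n-m) * (B$i * (h^i)$m))"
      by (simp add: sum_distrib_left)
  qed
  also have "\<dots> = (\<Sum>i=0..n. \<Sum>m=0..n. P$(n-m) * (B$i * (h^i)$m))"
    by (rule sum.swap)
  also have "\<dots> = (\<Sum>i=0..n. B$i * (P * h^i)$n)"
  proof (rule sum.cong[OF refl])
    fix i
    have "(P * h^i)$n = (\<Sum>m=0..n. P$(n-m) * (h^i)$m)"
      unfolding fps_mult_nth by (rule sum.reindex_bij_witness[where i="\<lambda>m. n-m" and j="\<lambda>m. n-m"]) auto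
    then show "(\<Sum>m=0..n. P$(n-m) * (B$i * (h^i)$m)) = B$i * (P * h^i)$n"
      by (simp add: sum_distrib_left mult_ac)
  qed
  finally show ?thesis .
qed

theorem proposition2p1:
  fixes g f A :: "'a::field fps" and b :: "nat \<Rightarrow> 'a"
  assumes "riordan g f"
    and "is_A_series f A"
  defines "B \<equiv> Abs_fps b"
  shows "(is_B_seq_I g f b \<longrightarrow>
            f = fps_X + fps_X * f * fps_compose B (fps_X * f)
          \<and> fps_X = fps_inv f + fps_X * fps_inv f * fps_compose B (fps_X * fps_inv f)
          \<and> A = 1 + fps_X * fps_compose B (fps_X ^ 2 * inverse A))
       \<and> ((f = fps_X + fps_X * f * fps_compose B (fps_X * f))
            \<longleftrightarrow> (fps_X = fps_inv f + fps_X * fps_inv f * fps_compose B (fps_X * fps_inv f)))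
       \<and> ((fps_X = fps_inv f + fps_X * fps_inv f * fps_compose B (fps_X * fps_inv f))
            \<longleftrightarrow> (A = 1 + fps_X * fps_compose B (fps_X ^ 2 * inverse A)))"
proof -
  have g0: "g$0 = 1" and f0: "f$0 = 0" and f1: "f$1 \<noteq> 0"
    using assms(1) by (auto simp: riordan_def)
  define F where "F = fps_inv f"
  have F0: "F$0 = 0" using F_def by (simp add: fps_inv_def)
  have fF: "f oo F = fps_X" unfolding F_def by (rule fps_inv_right[OF f0 f1])
  have Ff: "F oo f = fps_X" unfolding F_def by (rule fps_inv[OF f0 f1])
  have Xf0: "(fps_X * f)$0 = 0" and XF0: "(fps_X * F)$0 = 0" by simp_all
  have Af: "f = fps_X * (A oo f)" using assms(2) by (simp add: is_A_series_def)
  have A0: "A$0 \<noteq> 0"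
  proof -
    have "f$1 = (fps_X * (A oo f))$1" using Af by simp
    also have "\<dots> = A$0" by simp
    finally show ?thesis using f1 by simp
  qed
  have FA: "F * A = fps_X"
  proof -
    have "fps_X = f oo F" using fF by simp
    also have "\<dots> = (fps_X * (A oo f)) oo F" using Af by simp
    also have "\<dots> = F * ((A oo f) oo F)"
      by (simp add: fps_compose_mult_distrib[OF F0] F0)
    also have "(A oo f) oo F = A oo (f oo F)"
      by (rule fps_compose_assoc[symmetric, OF F0 f0])
    finally show ?thesis using fF by simp
  qed
  define IA where "IA = inverse A"
  have AIA: "A * IA = 1" unfolding IA_def by (rule inverse_mult_eq_1'[OF A0])
  have FIA: "F = fps_X * IA"
  proof -
    have "F = F * (A * IA)" using AIA by simp
    also have "\<dots> = fps_X * IA" using FA by (simp add: mult.assoc[symmetric])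
    finally show ?thesis .
  qed
  define E1 where "E1 = (f = fps_X + fps_X * f * (B oo (fps_X * f)))"
  define E2 where "E2 = (fps_X = F + fps_X * F * (B oo (fps_X * F)))"
  define E3 where "E3 = (A = 1 + fps_X * (B oo (fps_X ^ 2 * IA)))"
  have E12: "E1 \<longleftrightarrow> E2"
  proof
    assume E1
    then have "f oo F = (fps_X + fps_X * f * (B oo (fps_X * f))) oo F"
      unfolding E1_def by simp
    also have "\<dots> = F + F * fps_X * ((B oo (fps_X * f)) oo F)"
      by (simp add: fps_compose_add_distrib fps_compose_mult_distrib[OF F0] F0 fF)
    also have "(B oo (fps_X * f)) oo F = B oo ((fps_X * f) oo F)"
      by (rule fps_compose_assoc[symmetric, OF F0 Xf0])
    also have "(fps_X * f) oo F = F * fps_X"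
      by (simp add: fps_compose_mult_distrib[OF F0] F0 fF)
    finally show E2 unfolding E2_def using fF by (simp add: ac_simps)
  next
    assume E2
    then have "fps_X oo f = (F + fps_X * F * (B oo (fps_X * F))) oo f"
      unfolding E2_def by simp
    also have "\<dots> = fps_X + f * fps_X * ((B oo (fps_X * F)) oo f)"
      by (simp add: fps_compose_add_distrib fps_compose_mult_distrib[OF f0] f0 Ff)
    also have "(B oo (fps_X * F)) oo f = B oo ((fps_X * F) oo f)"
      by (rule fps_compose_assoc[symmetric, OF f0 XF0])
    also have "(fps_X * F) oo f = f * fps_X"
      by (simp add: fps_compose_mult_distrib[OF f0] f0 Ff)
    finally show E1 unfolding E1_def using f0 by (simp add: ac_simps)
  qed
  have E23: "E2 \<longleftrightarrow> E3"
  proof -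
    define D where "D = B oo (fps_X ^ 2 * IA)"
    have XXF: "fps_X * F = fps_X ^ 2 * IA" using FIA by (simp add: power2_eq_square mult.assoc)
    have Anz: "A \<noteq> 0" using A0 by auto
    have Xnz: "(fps_X :: 'a fps) \<noteq> 0" by simp
    have "E2 \<longleftrightarrow> fps_X = fps_X * IA + fps_X * (fps_X * IA) * D"
      unfolding E2_def D_def XXF using FIA by (simp add: power2_eq_square mult.assoc)
    also have "\<dots> \<longleftrightarrow> fps_X * A = (fps_X * IA + fps_X * (fps_X * IA) * D) * A"
      using Anz by simp
    also have "(fps_X * IA + fps_X * (fps_X * IA) * D) * A = fps_X * (1 + fps_X * D)"
    proof -
      have "(fps_X * IA + fps_X * (fps_X * IA) * D) * A
          = fps_X * (A * IA) + fps_X * fps_X * D * (A * IA)"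
        by (simp add: algebra_simps)
      then show ?thesis using AIA by (simp add: algebra_simps)
    qed
    also have "fps_X * A = fps_X * (1 + fps_X * D) \<longleftrightarrow> A = 1 + fps_X * D"
      using Xnz by simp
    finally show ?thesis unfolding E3_def D_def .
  qed
  have E1B: "is_B_seq_I g f b \<Longrightarrow> E1"
  proof -
    assume Bs: "is_B_seq_I g f b"
    define C where "C = B oo (fps_X * f)"
    have key: "g * f = fps_X * g + fps_X * (g * f * C)"
    proof (rule fps_ext)
      fix n show "(g * f)$n = (fps_X * g + fps_X * (g * f * C))$n"
      proof (cases n)
        case 0 then show ?thesis using f0 by simp
      next
        case (Suc m)
        have r: "rentry g f (int m + 1) 1 = rentry g f (int m) (1 - 1)
            + (\<Sum>j\<in>{0..nat (int m)}. b j * rentry g f (int m - int j) (1 + int j))"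
        proof -
          have "\<forall>n::int. \<forall>k::int. n \<ge> 0 \<longrightarrow> k \<ge> 1 \<longrightarrow> rentry g f (n + 1) k = rentry g f n (k - 1) + (\<Sum>j\<in>{0..nat n}. b j * rentry g f (n - int j) (k + int j))"
            using Bs unfolding is_B_seq_I_def by blast
          then have "rentry g f (int m + 1) 1 = rentry g f (int m) (1 - 1) + (\<Sum>j\<in>{0..nat (int m)}. b j * rentry g f (int m - int j) (1 + int j))"
            by (metis of_nat_0_le_iff order_refl)
          then show ?thesis by simp
        qed
        have r1: "rentry g f (int m + 1) 1 = (g * f)$(Suc m)"
          using rentry_eq[OF f0, of "int m + 1" 1 g] by (simp add: nat_add_distrib)
        have r0: "rentry g f (int m) (1 - 1) = g$m"
          using rentry_eq[OF f0, of "int m" 0 g] by simp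
        have rj: "b j * rentry g f (int m - int j) (1 + int j) = B$j * (g * f * (fps_X * f)^j)$m"
          if j: "j \<in> {0..m}" for j
        proof -
          have "rentry g f (int m - int j) (1 + int j) = (g * f^(Suc j))$(m - j)"
            using rentry_eq[OF f0, of "int m - int j" "1 + int j" g] j
            by (simp add: nat_diff_distrib nat_add_distrib)
          moreover have "(g * f * (fps_X * f)^j)$m = (g * f^(Suc j))$(m - j)"
          proof -
            have "g * f * (fps_X * f)^j = fps_X^j * (g * f^(Suc j))"
              by (simp add: power_mult_distrib ac_simps)
            then show ?thesis using j by (simp only: fps_X_power_mult_nth) simp
          qed
          ultimately show ?thesis by (simp add: B_def)
        qed
        have "(fps_X * g + fps_X * (g * f * C))$n = g$m + (g * f * C)$m"
          using Suc by simp
        also have "(g * f * C)$m = (\<Sum>j=0..m. B$j * (g * f * (fps_X * f)^j)$m)"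
          unfolding C_def by (rule mult_compose_nth[OF Xf0])
        also have "\<dots> = (\<Sum>j\<in>{0..nat (int m)}. b j * rentry g f (int m - int j) (1 + int j))"
          using rj by simp
        finally show ?thesis using r r1 r0 Suc by simp
      qed
    qed
    have "g * f = g * (fps_X + fps_X * f * C)"
      using key by (simp add: algebra_simps)
    moreover have "g \<noteq> 0" using g0 by auto
    ultimately have "f = fps_X + fps_X * f * C" by simp
    then show E1 unfolding E1_def C_def .
  qed
  show ?thesis
    using E1B E12 E23 unfolding E1_def E2_def E3_def F_def IA_def by blast
qed

end
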